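(* Let $C$ be a ternary linear $[n,k,d]$ code with $\dim(C\cap C^{\perp_E})=s$. For any $i\in\{1,\ldots,n\}$, if $C_i$ denotes the shortened code of $C$ on the $i$-th coordinate, then $\dim(C_i\cap C_i^{\perp_E})\le s+1$.
   Context: A ternary $[n,k,d]$ code is a $k$-dimensional subspace of $\mathbb{F}_3^n$ with minimum nonzero Hamming weight $d$. $C^{\perp_E}$ is the dual with respect to $\langle x,y\rangle_E=\sum x_iy_i$. The shortened code $C_i$ is obtained by taking the codewords of $C$ whose $i$-th coordinate is $0$ and deleting that coordinate. *)

theory Defs
  imports Complex_Main "HOL-Library.Function_Algebras"
begin

text \<open>Words of length n over a field 'a are modelled as functions nat => 'a
  vanishing outside the coordinates {0..<n} (coordinates are 0-based).\<close>

definition fscale :: "'a::field \<Rightarrow> (nat \<Rightarrow> 'a) \<Rightarrow> (nat \<Rightarrow> 'a)" where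
  "fscale c v = (\<lambda>j. c * v j)"

definition words :: "nat \<Rightarrow> (nat \<Rightarrow> 'a::zero) set" where
  "words n = {v. \<forall>j\<ge>n. v j = 0}"

definition is_linear_code :: "nat \<Rightarrow> (nat \<Rightarrow> 'a::field) set \<Rightarrow> bool" where
  "is_linear_code n C \<longleftrightarrow> C \<subseteq> words n \<and> Modules.module.subspace fscale C"

definition code_dim :: "(nat \<Rightarrow> 'a::field) set \<Rightarrow> nat" where
  "code_dim C = Vector_Spaces.vector_space.dim fscale C"

definition hamming_wt :: "nat \<Rightarrow> (nat \<Rightarrow> 'a::zero) \<Rightarrow> nat" where
  "hamming_wt n v = card {j. j < n \<and> v j \<noteq> 0}"

text \<open>Minimum nonzero Hamming weight (Inf of the empty set is 0 for nat).\<close>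
definition min_wt :: "nat \<Rightarrow> (nat \<Rightarrow> 'a::zero) set \<Rightarrow> nat" where
  "min_wt n C = Inf {hamming_wt n v | v. v \<in> C \<and> v \<noteq> 0}"

definition euclid_ip :: "nat \<Rightarrow> (nat \<Rightarrow> 'a::comm_ring) \<Rightarrow> (nat \<Rightarrow> 'a) \<Rightarrow> 'a" where
  "euclid_ip n x y = (\<Sum>j<n. x j * y j)"

definition euclid_dual :: "nat \<Rightarrow> (nat \<Rightarrow> 'a::comm_ring) set \<Rightarrow> (nat \<Rightarrow> 'a) set" where
  "euclid_dual n C = {y \<in> words n. \<forall>x\<in>C. euclid_ip n x y = 0}"

definition delete_coord :: "nat \<Rightarrow> (nat \<Rightarrow> 'a) \<Rightarrow> (nat \<Rightarrow> 'a)" where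
  "delete_coord i v = (\<lambda>j. if j < i then v j else v (Suc j))"

definition shortened :: "nat \<Rightarrow> (nat \<Rightarrow> 'a::zero) set \<Rightarrow> (nat \<Rightarrow> 'a) set" where
  "shortened i C = delete_coord i ` {v \<in> C. v i = 0}"

end

theory Submission imports Defs begin

interpretation fs: vector_space "fscale :: 'a::field \<Rightarrow> (nat \<Rightarrow> 'a) \<Rightarrow> (nat \<Rightarrow> 'a)"
  by unfold_locales (auto simp: fscale_def fun_eq_iff algebra_simps)

lemma fscale_apply[simp]: "fscale c v j = c * v j" by (simp add: fscale_def)

definition ue :: "nat \<Rightarrow> nat \<Rightarrow> 'a::field" where "ue j = (\<lambda>k. if k = j then 1 else 0)"

lemma words_span: "words n \<subseteq> fs.span (ue ` {..<n} :: (nat \<Rightarrow> 'a::field) set)"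
proof
  fix v :: "nat \<Rightarrow> 'a" assume v: "v \<in> words n"
  have "v = (\<Sum>j<n. fscale (v j) (ue j))"
  proof (rule ext)
    fix k
    have "(\<Sum>j<n. fscale (v j) (ue j)) k = (\<Sum>j<n. v j * ue j k)"
      by (induction n) auto
    also have "\<dots> = v k" using v by (auto simp: ue_def words_def sum.delta' if_distrib cong: if_cong)
    finally show "v k = (\<Sum>j<n. fscale (v j) (ue j)) k" by simp
  qed
  also have "\<dots> \<in> fs.span (ue ` {..<n})"
    by (intro fs.span_sum fs.span_scale fs.span_base) auto
  finally show "v \<in> fs.span (ue ` {..<n})" .
qed

lemma fin_basis:
  assumes "V \<subseteq> words n"
  obtains B :: "(nat \<Rightarrow> 'a::field) set" where "B \<subseteq> V" "fs.independent B" "V \<subseteq> fs.span B" "card B = fs.dim V" "finite B"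
proof -
  obtain B where B: "B \<subseteq> V" "fs.independent B" "V \<subseteq> fs.span B" "card B = fs.dim V"
    using fs.basis_exists by blast
  have "finite B" using fs.independent_span_bound[OF _ B(2), of "ue ` {..<n}"] B(1) assms words_span by blast
  with B that show ?thesis by blast
qed

lemma dim_mono_words:
  assumes "V \<subseteq> words n" "U \<subseteq> V"
  shows "fs.dim U \<le> fs.dim (V :: (nat \<Rightarrow> 'a::field) set)"
proof -
  obtain BV :: "(nat \<Rightarrow> 'a) set" where BV: "BV \<subseteq> V" "fs.independent BV" "V \<subseteq> fs.span BV" "card BV = fs.dim V" "finite BV"
    using fin_basis[OF assms(1)] by blast
  show ?thesis using fs.dim_le_card[of U BV] BV assms by auto
qed

lemma ip_add2: "euclid_ip n x (y + z) = euclid_ip n x y + euclid_ip n x (z::nat \<Rightarrow> 'a::field)"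
  by (simp add: euclid_ip_def algebra_simps sum.distrib)
lemma ip_scale2: "euclid_ip n x (fscale t y) = t * euclid_ip n x (y::nat \<Rightarrow> 'a::field)"
  by (simp add: euclid_ip_def sum_distrib_left algebra_simps)
lemma ip_comm: "euclid_ip n x y = euclid_ip n y (x::nat \<Rightarrow> 'a::field)"
  by (simp add: euclid_ip_def mult.commute)

lemma ip_delete:
  assumes "i < n" "x i = 0"
  shows "euclid_ip (n - 1) (delete_coord i x) (delete_coord i y) = euclid_ip n x (y::nat \<Rightarrow> 'a::field)"
proof -
  define g where "g j = (if j < i then j else Suc j)" for j
  have inj: "inj_on g {..<n-1}" unfolding inj_on_def g_def by (auto split: if_splits)
  have img: "g ` {..<n-1} = {..<n} - {i}"
  proof
    show "g ` {..<n-1} \<subseteq> {..<n} - {i}" using assms unfolding g_def by (auto split: if_splits)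
    show "{..<n} - {i} \<subseteq> g ` {..<n-1}"
    proof
      fix j assume j: "j \<in> {..<n} - {i}"
      show "j \<in> g ` {..<n - 1}"
      proof (cases "j < i")
        case True then show ?thesis using j assms unfolding g_def by (intro image_eqI[of _ _ j]) auto
      next
        case False then show ?thesis using j assms unfolding g_def by (intro image_eqI[of _ _ "j - 1"]) auto
      qed
    qed
  qed
  have bij: "bij_betw g {..<n-1} ({..<n} - {i})" using inj img by (simp add: bij_betw_def)
  have "euclid_ip n x y = (\<Sum>j\<in>{..<n} - {i}. x j * y j)"
    unfolding euclid_ip_def using assms by (intro sum.mono_neutral_right) auto
  also have "\<dots> = (\<Sum>j<n-1. x (g j) * y (g j))"
    using sum.reindex_bij_betw[OF bij, of "\<lambda>j. x j * y j"] by simp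
  also have "\<dots> = euclid_ip (n - 1) (delete_coord i x) (delete_coord i y)"
    unfolding euclid_ip_def delete_coord_def g_def by (intro sum.cong) auto
  finally show ?thesis by simp
qed

lemma delete_hom: "module_hom fscale fscale (delete_coord i :: (nat \<Rightarrow> 'a::field) \<Rightarrow> _)"
  unfolding module_hom_iff
  by (auto simp: delete_coord_def fun_eq_iff fs.module_axioms)

lemma dim_image_delete:
  assumes "K \<subseteq> words n" "H \<subseteq> delete_coord i ` K"
  shows "fs.dim H \<le> fs.dim (K :: (nat \<Rightarrow> 'a::field) set)"
proof -
  obtain B :: "(nat \<Rightarrow> 'a) set" where B: "B \<subseteq> K" "fs.independent B" "K \<subseteq> fs.span B" "card B = fs.dim K" "finite B"
    using fin_basis[OF assms(1)] by blast
  have "H \<subseteq> fs.span (delete_coord i ` B)"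
    using assms(2) module_hom.spans_image[OF delete_hom B(3), of i] by blast
  then have "fs.dim H \<le> card (delete_coord i ` B)"
    using fs.dim_le_card B(5) by blast
  also have "\<dots> \<le> card B" using B(5) card_image_le by blast
  finally show ?thesis using B(4) by simp
qed


theorem proposition5p3:
  fixes C :: "(nat \<Rightarrow> 'a::field) set" and n k d s i :: nat
  assumes "card (UNIV :: 'a set) = 3"
    and "is_linear_code n C"
    and "k = code_dim C"
    and "d = min_wt n C"
    and "code_dim (C \<inter> euclid_dual n C) = s"
    and "i < n"
  shows "code_dim (shortened i C \<inter> euclid_dual (n - 1) (shortened i C)) \<le> s + 1"
proof -
  have Cw: "C \<subseteq> words n" and sub: "fs.subspace C" using assms(2) by (auto simp: is_linear_code_def)
  have add: "x + y \<in> C" if "x \<in> C" "y \<in> C" for x y using sub that by (rule fs.subspace_add)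
  have scl: "fscale t x \<in> C" if "x \<in> C" for t x using sub that by (rule fs.subspace_scale)
  define D where "D = {v\<in>C. v i = 0}"
  define K where "K = {v\<in>D. \<forall>x\<in>D. euclid_ip n x v = 0}"
  have Kw: "K \<subseteq> words n" using Cw by (auto simp: K_def D_def)
  have "shortened i C \<inter> euclid_dual (n - 1) (shortened i C) \<subseteq> delete_coord i ` K"
  proof
    fix w assume w: "w \<in> shortened i C \<inter> euclid_dual (n - 1) (shortened i C)"
    then obtain v where v: "v \<in> D" "w = delete_coord i v" by (auto simp: shortened_def D_def)
    have "euclid_ip n x v = 0" if "x \<in> D" for x
    proof -
      have "delete_coord i x \<in> shortened i C" using that by (auto simp: shortened_def D_def)
      then have "euclid_ip (n - 1) (delete_coord i x) w = 0" using w by (auto simp: euclid_dual_def)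
      then show ?thesis using ip_delete[OF assms(6), of x v] that v by (simp add: D_def)
    qed
    then show "w \<in> delete_coord i ` K" using v by (auto simp: K_def)
  qed
  then have dimH: "fs.dim (shortened i C \<inter> euclid_dual (n - 1) (shortened i C)) \<le> fs.dim K"
    by (rule dim_image_delete[OF Kw])
  obtain c where c: "c \<in> C" "\<forall>x\<in>C. x i = 0 \<or> c i \<noteq> 0"
  proof (cases "\<exists>c\<in>C. c i \<noteq> 0")
    case True then show ?thesis using that by blast
  next
    case False then show ?thesis using that[of 0] fs.subspace_0[OF sub] by auto
  qed
  define K0 where "K0 = {v\<in>K. euclid_ip n c v = 0}"
  have K0H: "K0 \<subseteq> C \<inter> euclid_dual n C"
  proof
    fix v assume v: "v \<in> K0"
    have "euclid_ip n x v = 0" if x: "x \<in> C" for x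
    proof -
      define t where "t = x i / c i"
      define y where "y = x + fscale (-t) c"
      have "y \<in> C" unfolding y_def using add[OF x scl[OF c(1)]] .
      moreover have "y i = 0" using x c unfolding y_def t_def by auto
      ultimately have "y \<in> D" unfolding D_def by simp
      then have "euclid_ip n y v = 0" using v by (auto simp: K0_def K_def)
      moreover have "x = y + fscale t c" by (simp add: y_def fun_eq_iff)
      ultimately have "euclid_ip n v x = euclid_ip n v y + t * euclid_ip n v c"
        by (simp add: ip_add2 ip_scale2)
      then show ?thesis using v \<open>euclid_ip n y v = 0\<close> by (simp add: ip_comm[of n v] K0_def)
    qed
    then show "v \<in> C \<inter> euclid_dual n C" using v Kw
      by (auto simp: K0_def K_def D_def euclid_dual_def)
  qed
  have HW: "C \<inter> euclid_dual n C \<subseteq> words n" using Cw by auto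
  have dimK0: "fs.dim K0 \<le> s"
    using dim_mono_words[OF HW K0H] assms(5) by (simp add: code_dim_def)
  have dimK: "fs.dim K \<le> fs.dim K0 + 1"
  proof (cases "\<exists>c'\<in>K. euclid_ip n c c' \<noteq> 0")
    case False
    then have "K = K0" by (auto simp: K0_def)
    then show ?thesis by simp
  next
    case True
    then obtain c' where c': "c' \<in> K" "euclid_ip n c c' \<noteq> 0" by blast
    have K0w: "K0 \<subseteq> words n" using Kw by (auto simp: K0_def)
    obtain B :: "(nat \<Rightarrow> 'a) set" where B: "B \<subseteq> K0" "fs.independent B" "K0 \<subseteq> fs.span B" "card B = fs.dim K0" "finite B"
      using fin_basis[OF K0w] by blast
    have "K \<subseteq> fs.span (insert c' B)"
    proof
      fix v assume v: "v \<in> K"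
      define t where "t = euclid_ip n c v / euclid_ip n c c'"
      define w where "w = v + fscale (-t) c'"
      have "w \<in> C" unfolding w_def using add[OF _ scl] v c'(1) unfolding K_def D_def by blast
      moreover have "w i = 0" using v c' unfolding w_def K_def D_def by auto
      moreover have "euclid_ip n x w = 0" if "x \<in> D" for x
        using v c' that unfolding w_def K_def by (simp only: ip_add2 ip_scale2) simp
      moreover have "euclid_ip n c w = 0"
        using c'(2) unfolding w_def t_def by (simp only: ip_add2 ip_scale2) simp
      ultimately have "w \<in> K0" by (auto simp: K0_def K_def D_def)
      then have "w \<in> fs.span (insert c' B)" using B(3) fs.span_mono[of B "insert c' B"] by blast
      moreover have "fscale t c' \<in> fs.span (insert c' B)"
        by (intro fs.span_scale fs.span_base) simp
      ultimately have "w + fscale t c' \<in> fs.span (insert c' B)" by (rule fs.span_add)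
      moreover have "w + fscale t c' = v" by (simp add: w_def fun_eq_iff)
      ultimately show "v \<in> fs.span (insert c' B)" by simp
    qed
    then have "fs.dim K \<le> card (insert c' B)" using fs.dim_le_card B(5) by blast
    also have "\<dots> \<le> card B + 1" using B(5) by (simp add: card_insert_if)
    finally show ?thesis using B(4) by simp
  qed
  show ?thesis using dimH dimK dimK0 by (simp add: code_dim_def)
qed

end
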